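(* Let $\mathbf{S}\in\mathbb{R}^{d_v\times d_k}$ be a nonzero matrix with largest singular value $\sigma_1$ and an associated unit right singular vector $\mathbf{w}_1\in\mathbb{R}^{d_k}$, and let $d=\min(d_k,d_v)$. Let $\mathbf{q}^*\in\mathbb{R}^{d_k}$ with $\|\mathbf{q}^*\|_2=1$, $\mathbf{S}\mathbf{q}^*\neq\mathbf{0}$, and $\gamma=|\mathbf{q}^{*\top}\mathbf{w}_1|>0$. Let the noise be isotropic Gaussian, $\mathbf{n}\sim\mathcal{N}(\mathbf{0},\xi^2\mathbf{I}_{d_k})$ with $\xi>0$, and set $\mathbf{o}=\mathbf{S}(\mathbf{q}^*+\mathbf{n})$, $\mathbf{o}^*=\mathbf{S}\mathbf{q}^*$. Then $$\sqrt{\frac{2}{\pi\operatorname{er}(\mathbf{S})}}\,\xi\le\mathbb{E}\left[\frac{\|\mathbf{o}-\mathbf{o}^*\|_2}{\|\mathbf{o}^*\|_2}\right]\le\frac{\sqrt{\operatorname{er}(\mathbf{S})}}{\gamma}\,\xi\,\mu,\qquad \mu:=\sqrt{2}\,\frac{\Gamma(\frac{d+1}{2})}{\Gamma(\frac d2)}.$$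
   Context: For a nonzero matrix $\mathbf{S}$ with singular values $\sigma_1\ge\sigma_2\ge\cdots\ge0$, the effective rank is $\operatorname{er}(\mathbf{S})=\|\mathbf{S}\|_F^2/\|\mathbf{S}\|_2^2=\sum_i\sigma_i^2/\sigma_1^2$. $\Gamma$ is the Gamma function. *)

theory Defs
  imports "HOL-Probability.Probability"
begin

definition frob_norm :: "real^'k^'v \<Rightarrow> real" where
  "frob_norm S = sqrt (\<Sum>i\<in>UNIV. \<Sum>j\<in>UNIV. (S $ i $ j)\<^sup>2)"

text \<open>Spectral norm = operator 2-norm = largest singular value sigma_1.\<close>
definition spec_norm :: "real^'k^'v \<Rightarrow> real" where
  "spec_norm S = onorm (\<lambda>x. S *v x)"

definition eff_rank :: "real^'k^'v \<Rightarrow> real" where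
  "eff_rank S = (frob_norm S)\<^sup>2 / (spec_norm S)\<^sup>2"

definition top_right_singular_vector :: "real^'k^'v \<Rightarrow> real^'k \<Rightarrow> bool" where
  "top_right_singular_vector S w \<longleftrightarrow>
     norm w = 1 \<and> (transpose S ** S) *v w = (spec_norm S)\<^sup>2 *\<^sub>R w"

definition iso_gaussian :: "real \<Rightarrow> (real^'k) measure" where
  "iso_gaussian \<xi> = density lborel (\<lambda>x. ennreal (\<Prod>i\<in>UNIV. normal_density 0 \<xi> (x $ i)))"

end

theory Submission
  imports Defs
begin


lemma prod_Basis_vec:
  "(\<Prod>b\<in>(Basis :: (real^'k) set). f b) = (\<Prod>i\<in>UNIV. f (axis i 1))"
proof -
  have B: "(Basis :: (real^'k) set) = (\<lambda>i. axis i 1) ` UNIV"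
    by (auto simp: Basis_vec_def)
  have I: "inj (\<lambda>i::'k. axis i (1::real))"
    by (auto simp: inj_def axis_eq_axis)
  show ?thesis by (subst B) (simp add: prod.reindex[OF I])
qed

lemma vec_lambda_measurable[measurable]:
  "(\<lambda>f. \<chi> i. f i) \<in> PiM UNIV (\<lambda>_::'k. lborel :: real measure) \<rightarrow>\<^sub>M (borel :: (real^'k) measure)"
proof (rule borel_measurable_euclidean_space[THEN iffD2], intro ballI)
  fix b :: "real^'k" assume "b \<in> Basis"
  then obtain j where b: "b = axis j 1" by (auto simp: Basis_vec_def)
  have "(\<lambda>f. (\<chi> i. f i) \<bullet> b) = (\<lambda>f. f j)" by (simp add: b inner_axis)
  then show "(\<lambda>f. (\<chi> i. f i) \<bullet> b) \<in> borel_measurable (PiM UNIV (\<lambda>_::'k. lborel :: real measure))"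
    by simp
qed

lemma lborel_vec:
  "(lborel :: (real^'k) measure) = distr (PiM UNIV (\<lambda>_::'k. lborel)) borel (\<lambda>f. \<chi> i. f i)"
proof (rule lborel_eqI)
  interpret product_sigma_finite "\<lambda>_::'k. lborel :: real measure" by unfold_locales
  fix l u :: "real^'k"
  assume le: "\<And>b. b \<in> Basis \<Longrightarrow> l \<bullet> b \<le> u \<bullet> b"
  then have le': "l $ i \<le> u $ i" for i
    using le[of "axis i 1"] by (auto simp: Basis_vec_def inner_axis)
  have pre: "(\<lambda>f. \<chi> i. f i) -` box l u \<inter> space (PiM UNIV (\<lambda>_::'k. lborel :: real measure))
      = PiE UNIV (\<lambda>i. {l$i <..< u$i})"
    by (auto simp: mem_box_cart space_PiM PiE_def Pi_def extensional_def)
  have "emeasure (distr (PiM UNIV (\<lambda>_::'k. lborel)) borel (\<lambda>f. \<chi> i. f i)) (box l u)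
      = emeasure (PiM UNIV (\<lambda>_::'k. lborel :: real measure)) (PiE UNIV (\<lambda>i. {l$i <..< u$i}))"
    by (subst emeasure_distr) (auto simp: pre)
  also have "\<dots> = (\<Prod>i\<in>UNIV. emeasure lborel {l$i <..< u$i})"
    by (rule emeasure_PiM) auto
  also have "\<dots> = (\<Prod>i\<in>UNIV. ennreal (u$i - l$i))"
    using le' by simp
  also have "\<dots> = ennreal (\<Prod>i\<in>UNIV. u$i - l$i)"
    using le' by (simp add: prod_ennreal)
  also have "(\<Prod>i\<in>UNIV. u$i - l$i) = (\<Prod>b\<in>Basis. (u - l) \<bullet> b)"
    by (simp add: prod_Basis_vec inner_axis)
  finally show "emeasure (distr (PiM UNIV (\<lambda>_::'k. lborel)) borel (\<lambda>f. \<chi> i. f i)) (box l u)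
      = ennreal (\<Prod>b\<in>Basis. (u - l) \<bullet> b)" .
qed simp



definition NQ :: "real \<Rightarrow> real measure" where
  "NQ \<xi> = density lborel (\<lambda>x. ennreal (normal_density 0 \<xi> x))"

definition GQ :: "real \<Rightarrow> ('k \<Rightarrow> real) measure" where
  "GQ \<xi> = PiM UNIV (\<lambda>_. NQ \<xi>)"

lemma prob_space_NQ: "\<xi> > 0 \<Longrightarrow> prob_space (NQ \<xi>)"
  unfolding NQ_def by (rule prob_space_normal_density) auto

lemma sets_NQ[simp, measurable_cong]: "sets (NQ \<xi>) = sets borel"
  by (simp add: NQ_def)

lemma iso_gaussian_distr:
  assumes "\<xi> > 0"
  shows "(iso_gaussian \<xi> :: (real^'k) measure) = distr (GQ \<xi>) borel (\<lambda>f. \<chi> i. f i)"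
proof -
  let ?P = "PiM UNIV (\<lambda>_::'k. lborel :: real measure)"
  interpret L: product_sigma_finite "\<lambda>_::'k. lborel :: real measure" by unfold_locales
  interpret N: product_prob_space "\<lambda>_::'k. NQ \<xi>"
    by (simp add: product_prob_space_def product_prob_space_axioms_def product_sigma_finite_def prob_space_NQ[OF assms]
        prob_space_imp_sigma_finite)
  have "(iso_gaussian \<xi> :: (real^'k) measure)
      = density (distr ?P borel (\<lambda>f. \<chi> i. f i)) (\<lambda>x. ennreal (\<Prod>i\<in>UNIV. normal_density 0 \<xi> (x $ i)))"
    unfolding iso_gaussian_def by (subst lborel_vec) simp
  also have "\<dots> = distr (density ?P (\<lambda>f. ennreal (\<Prod>i\<in>UNIV. normal_density 0 \<xi> (f i)))) borel (\<lambda>f. \<chi> i. f i)"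
    by (subst density_distr) auto
  also have "density ?P (\<lambda>f. ennreal (\<Prod>i\<in>UNIV. normal_density 0 \<xi> (f i))) = GQ \<xi>"
    unfolding GQ_def
  proof (rule N.PiM_eqI)
    show "sets (density ?P (\<lambda>f. ennreal (\<Prod>i\<in>UNIV. normal_density 0 \<xi> (f i)))) = sets (PiM UNIV (\<lambda>_. NQ \<xi>))"
      by (auto intro!: sets_PiM_cong)
  next
    fix A :: "'k \<Rightarrow> real set"
    assume A: "\<And>i. i \<in> UNIV \<Longrightarrow> A i \<in> sets (NQ \<xi>)"
    have "emeasure (density ?P (\<lambda>f. ennreal (\<Prod>i\<in>UNIV. normal_density 0 \<xi> (f i)))) (PiE UNIV A)
       = (\<integral>\<^sup>+ f. ennreal (\<Prod>i\<in>UNIV. normal_density 0 \<xi> (f i)) * indicator (PiE UNIV A) f \<partial>?P)"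
      using A by (subst emeasure_density) (auto intro!: sets_PiM_I_finite)
    also have "\<dots> = (\<integral>\<^sup>+ f. (\<Prod>i\<in>UNIV. ennreal (normal_density 0 \<xi> (f i)) * indicator (A i) (f i)) \<partial>?P)"
    proof (rule nn_integral_cong)
      fix f :: "'k \<Rightarrow> real"
      have "indicator (PiE UNIV A) f = (\<Prod>i\<in>UNIV. indicator (A i) (f i) :: ennreal)"
        by (auto simp: indicator_def PiE_def Pi_def extensional_def)
      then show "ennreal (\<Prod>i\<in>UNIV. normal_density 0 \<xi> (f i)) * indicator (PiE UNIV A) f
          = (\<Prod>i\<in>UNIV. ennreal (normal_density 0 \<xi> (f i)) * indicator (A i) (f i))"
        by (simp add: prod.distrib prod_ennreal)
    qed
    also have "\<dots> = (\<Prod>i\<in>UNIV. \<integral>\<^sup>+ x. ennreal (normal_density 0 \<xi> x) * indicator (A i) x \<partial>lborel)"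
      using A by (intro L.product_nn_integral_prod) auto
    also have "\<dots> = (\<Prod>i\<in>UNIV. emeasure (NQ \<xi>) (A i))"
      using A unfolding NQ_def by (intro prod.cong refl) (subst emeasure_density, auto)
    finally show "emeasure (density ?P (\<lambda>f. ennreal (\<Prod>i\<in>UNIV. normal_density 0 \<xi> (f i)))) (PiE UNIV A)
       = (\<Prod>i\<in>UNIV. emeasure (NQ \<xi>) (A i))" .
  qed simp
  finally show ?thesis .
qed



lemma prob_space_GQ: "\<xi> > 0 \<Longrightarrow> prob_space (GQ \<xi>)"
  unfolding GQ_def by (intro prob_space_PiM prob_space_NQ)

lemma space_GQ[simp]: "space (GQ \<xi>) = UNIV"
  by (simp add: GQ_def space_PiM NQ_def)

lemma GQ_component_distr:
  assumes "\<xi> > 0"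
  shows "distr (GQ \<xi>) borel (\<lambda>f. f i) = NQ \<xi>"
proof -
  have "distr (GQ \<xi>) borel (\<lambda>f. f i) = distr (GQ \<xi>) (NQ \<xi>) (\<lambda>f. f i)"
    by (rule distr_cong) auto
  also have "\<dots> = NQ \<xi>"
    unfolding GQ_def by (rule distr_PiM_component) (auto intro: prob_space_NQ assms)
  finally show ?thesis .
qed

lemma GQ_component_distributed:
  assumes "\<xi> > 0"
  shows "distributed (GQ \<xi>) lborel (\<lambda>f. f i) (\<lambda>x. ennreal (normal_density 0 \<xi> x))"
proof -
  have "distr (GQ \<xi>) lborel (\<lambda>f. f i) = distr (GQ \<xi>) borel (\<lambda>f. f i)"
    by (rule distr_cong) auto
  then show ?thesis
    unfolding distributed_def using GQ_component_distr[OF assms]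
    by (auto simp: NQ_def GQ_def)
qed

lemma GQ_indep:
  assumes "\<xi> > 0"
  shows "prob_space.indep_vars (GQ \<xi>) (\<lambda>_. borel) (\<lambda>i f. f i) (UNIV :: 'k set)"
proof -
  interpret prob_space "GQ \<xi>" by (rule prob_space_GQ[OF assms])
  show ?thesis
  proof (subst indep_vars_iff_distr_eq_PiM)
    show "distr (GQ \<xi>) (Pi\<^sub>M UNIV (\<lambda>_. borel)) (\<lambda>x. \<lambda>i\<in>UNIV. x i) =
      Pi\<^sub>M UNIV (\<lambda>i. distr (GQ \<xi>) borel (\<lambda>x. x i))"
    proof -
      have "distr (GQ \<xi>) (Pi\<^sub>M UNIV (\<lambda>_. borel)) (\<lambda>x. \<lambda>i\<in>UNIV. x i)
          = distr (GQ \<xi>) (GQ \<xi>) (\<lambda>x. x)"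
        by (rule distr_cong) (auto simp: GQ_def intro!: sets_PiM_cong)
      also have "\<dots> = GQ \<xi>" by (rule distr_id2) simp
      also have "\<dots> = Pi\<^sub>M UNIV (\<lambda>i. distr (GQ \<xi>) borel (\<lambda>x. x i))"
        unfolding GQ_component_distr[OF assms] by (simp add: GQ_def)
      finally show ?thesis .
    qed
  qed (auto simp: GQ_def)
qed

lemma GQ_lin_distributed:
  fixes a :: "'k::finite \<Rightarrow> real"
  assumes "\<xi> > 0" and a: "\<exists>i. a i \<noteq> 0"
  shows "distributed (GQ \<xi>) lborel (\<lambda>f. \<Sum>i\<in>UNIV. a i * f i)
           (\<lambda>x. ennreal (normal_density 0 (\<xi> * sqrt (\<Sum>i\<in>UNIV. (a i)\<^sup>2)) x))"
proof -
  interpret prob_space "GQ \<xi>" by (rule prob_space_GQ[OF assms(1)])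
  define I where "I = {i. a i \<noteq> 0}"
  have I: "finite I" "I \<noteq> {}" using a by (auto simp: I_def)
  have ind: "indep_vars (\<lambda>_. borel) (\<lambda>i f. a i * f i) I"
    using indep_vars_compose2[OF GQ_indep[OF assms(1)], of "\<lambda>i x. a i * x" "\<lambda>_. borel"]
    by (auto intro: indep_vars_subset)
  have dist: "distributed (GQ \<xi>) lborel (\<lambda>f. a i * f i) (normal_density 0 (\<bar>a i\<bar> * \<xi>))"
    if "i \<in> I" for i
    using normal_density_affine[OF GQ_component_distributed[OF assms(1), of i] assms(1), of "a i" 0]
      that by (simp add: I_def)
  have "distributed (GQ \<xi>) lborel (\<lambda>x. \<Sum>i\<in>I. a i * x i)
      (normal_density (\<Sum>i\<in>I. 0) (sqrt (\<Sum>i\<in>I. (\<bar>a i\<bar> * \<xi>)\<^sup>2)))"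
    by (rule sum_indep_normal[OF I ind]) (use assms dist in \<open>auto simp: I_def\<close>)
  moreover have "(\<lambda>x. \<Sum>i\<in>I. a i * x i) = (\<lambda>x. \<Sum>i\<in>UNIV. a i * x i)"
    by (intro ext sum.mono_neutral_left) (auto simp: I_def)
  moreover have "(\<Sum>i\<in>I. (\<bar>a i\<bar> * \<xi>)\<^sup>2) = \<xi>\<^sup>2 * (\<Sum>i\<in>UNIV. (a i)\<^sup>2)"
    by (simp add: power_mult_distrib sum_distrib_left mult.commute sum.mono_neutral_left I_def)
  moreover have "sqrt (\<xi>\<^sup>2 * (\<Sum>i\<in>UNIV. (a i)\<^sup>2)) = \<xi> * sqrt (\<Sum>i\<in>UNIV. (a i)\<^sup>2)"
    using assms(1) by (simp add: real_sqrt_mult)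
  ultimately show ?thesis by simp
qed



lemma GQ_lin_moments:
  fixes a :: "'k::finite \<Rightarrow> real"
  assumes "\<xi> > 0"
  defines "s \<equiv> sqrt (\<Sum>i\<in>UNIV. (a i)\<^sup>2)"
  shows "integrable (GQ \<xi>) (\<lambda>f. \<bar>\<Sum>i\<in>UNIV. a i * f i\<bar>)"
    and "(\<integral>f. \<bar>\<Sum>i\<in>UNIV. a i * f i\<bar> \<partial>GQ \<xi>) = sqrt (2 / pi) * \<xi> * s"
    and "integrable (GQ \<xi>) (\<lambda>f. (\<Sum>i\<in>UNIV. a i * f i)\<^sup>2)"
    and "(\<integral>f. (\<Sum>i\<in>UNIV. a i * f i)\<^sup>2 \<partial>GQ \<xi>) = \<xi>\<^sup>2 * s\<^sup>2"
proof -
  interpret prob_space "GQ \<xi>" by (rule prob_space_GQ[OF assms(1)])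
  have "integrable (GQ \<xi>) (\<lambda>f. \<bar>\<Sum>i\<in>UNIV. a i * f i\<bar>) \<and>
        (\<integral>f. \<bar>\<Sum>i\<in>UNIV. a i * f i\<bar> \<partial>GQ \<xi>) = sqrt (2 / pi) * \<xi> * s \<and>
        integrable (GQ \<xi>) (\<lambda>f. (\<Sum>i\<in>UNIV. a i * f i)\<^sup>2) \<and>
        (\<integral>f. (\<Sum>i\<in>UNIV. a i * f i)\<^sup>2 \<partial>GQ \<xi>) = \<xi>\<^sup>2 * s\<^sup>2"
  proof (cases "\<exists>i. a i \<noteq> 0")
    case False
    then have "a = (\<lambda>_. 0)" by auto
    then show ?thesis by (simp add: s_def)
  next
    case True
    have spos: "s > 0" unfolding s_def
      using True by (auto intro!: sum_pos2[where i="SOME i. a i \<noteq> 0"] someI_ex[OF True])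
    let ?\<sigma> = "\<xi> * s"
    have sig: "?\<sigma> > 0" using spos assms(1) by simp
    have D: "distributed (GQ \<xi>) lborel (\<lambda>f. \<Sum>i\<in>UNIV. a i * f i) (\<lambda>x. ennreal (normal_density 0 ?\<sigma> x))"
      using GQ_lin_distributed[OF assms(1) True] by (simp add: s_def)
    have m1: "has_bochner_integral lborel (\<lambda>x. normal_density 0 ?\<sigma> x * \<bar>x\<bar>) (sqrt (2 / pi) * \<xi> * s)"
      using normal_moment_abs_odd[OF sig, of 0 0] by (simp add: mult_ac)
    have m2: "has_bochner_integral lborel (\<lambda>x. normal_density 0 ?\<sigma> x * x\<^sup>2) (\<xi>\<^sup>2 * s\<^sup>2)"
      using normal_moment_even[OF sig, of 0 1] by (simp add: power_mult_distrib)
    have i1: "integrable (GQ \<xi>) (\<lambda>f. \<bar>\<Sum>i\<in>UNIV. a i * f i\<bar>)"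
      using distributed_integrable[OF D, of abs] m1 by (auto simp: has_bochner_integral_iff)
    have e1: "(\<integral>f. \<bar>\<Sum>i\<in>UNIV. a i * f i\<bar> \<partial>GQ \<xi>) = sqrt (2 / pi) * \<xi> * s"
      using distributed_integral[OF D, of abs] m1 by (auto simp: has_bochner_integral_iff)
    have i2: "integrable (GQ \<xi>) (\<lambda>f. (\<Sum>i\<in>UNIV. a i * f i)\<^sup>2)"
      using distributed_integrable[OF D, of "\<lambda>x. x\<^sup>2"] m2 by (auto simp: has_bochner_integral_iff)
    have e2: "(\<integral>f. (\<Sum>i\<in>UNIV. a i * f i)\<^sup>2 \<partial>GQ \<xi>) = \<xi>\<^sup>2 * s\<^sup>2"
      using distributed_integral[OF D, of "\<lambda>x. x\<^sup>2"] m2 by (auto simp: has_bochner_integral_iff)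
    show ?thesis using i1 e1 i2 e2 by blast
  qed
  then show "integrable (GQ \<xi>) (\<lambda>f. \<bar>\<Sum>i\<in>UNIV. a i * f i\<bar>)"
    and "(\<integral>f. \<bar>\<Sum>i\<in>UNIV. a i * f i\<bar> \<partial>GQ \<xi>) = sqrt (2 / pi) * \<xi> * s"
    and "integrable (GQ \<xi>) (\<lambda>f. (\<Sum>i\<in>UNIV. a i * f i)\<^sup>2)"
    and "(\<integral>f. (\<Sum>i\<in>UNIV. a i * f i)\<^sup>2 \<partial>GQ \<xi>) = \<xi>\<^sup>2 * s\<^sup>2" by blast+
qed

lemma norm_vec_sq: "(norm (x :: real^'k))\<^sup>2 = (\<Sum>i\<in>UNIV. (x $ i)\<^sup>2)"
  unfolding norm_vec_def L2_set_def by (simp add: sum_nonneg)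

lemma sets_GQ: "sets (GQ \<xi>) = sets (PiM UNIV (\<lambda>_. lborel))"
  unfolding GQ_def by (intro sets_PiM_cong) auto

lemma vec_lambda_GQ[measurable]: "(\<lambda>f. \<chi> i. f i) \<in> GQ \<xi> \<rightarrow>\<^sub>M (borel :: (real^'k) measure)"
  using vec_lambda_measurable measurable_cong_sets[OF sets_GQ refl] by blast

lemma iso_moments:
  fixes a :: "real^'k"
  assumes "\<xi> > 0"
  shows "integrable (iso_gaussian \<xi>) (\<lambda>n. \<bar>a \<bullet> n\<bar>)"
    and "(\<integral>n. \<bar>a \<bullet> n\<bar> \<partial>iso_gaussian \<xi>) = sqrt (2 / pi) * \<xi> * norm a"
    and "integrable (iso_gaussian \<xi>) (\<lambda>n. (a \<bullet> n)\<^sup>2)"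
    and "(\<integral>n. (a \<bullet> n)\<^sup>2 \<partial>iso_gaussian \<xi>) = \<xi>\<^sup>2 * (norm a)\<^sup>2"
proof -
  have na: "norm a = sqrt (\<Sum>i\<in>UNIV. (a $ i)\<^sup>2)"
    by (metis norm_vec_sq norm_ge_zero real_sqrt_unique)
  have ip: "a \<bullet> (\<chi> i. f i) = (\<Sum>i\<in>UNIV. a $ i * f i)" for f :: "'k \<Rightarrow> real"
    by (simp add: inner_vec_def)
  note M = GQ_lin_moments[OF assms, of "\<lambda>i. a $ i"]
  note D = iso_gaussian_distr[OF assms, where 'k='k]
  show "integrable (iso_gaussian \<xi>) (\<lambda>n. \<bar>a \<bullet> n\<bar>)"
    unfolding D by (subst integrable_distr_eq) (auto simp: ip M)
  show "(\<integral>n. \<bar>a \<bullet> n\<bar> \<partial>iso_gaussian \<xi>) = sqrt (2 / pi) * \<xi> * norm a"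
    unfolding D by (subst integral_distr) (auto simp: ip M na)
  show "integrable (iso_gaussian \<xi>) (\<lambda>n. (a \<bullet> n)\<^sup>2)"
    unfolding D by (subst integrable_distr_eq) (auto simp: ip M)
  show "(\<integral>n. (a \<bullet> n)\<^sup>2 \<partial>iso_gaussian \<xi>) = \<xi>\<^sup>2 * (norm a)\<^sup>2"
    unfolding D by (subst integral_distr) (auto simp: ip M na)
qed



lemma mv_row: "(S *v n) $ r = (S $ r) \<bullet> (n :: real^'k)"
  for S :: "real^'k^'v"
  by (simp add: matrix_vector_mult_def inner_vec_def mult.commute)

lemma mv_inner_eq: "(S *v x) \<bullet> (S *v y) = x \<bullet> ((transpose S ** S) *v (y :: real^'k))"
  for S :: "real^'k^'v"
proof -
  have "(S *v x) \<bullet> (S *v y) = (x v* transpose S) \<bullet> (S *v y)" by simp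
  also have "\<dots> = x \<bullet> (transpose S *v (S *v y))" by (rule dot_lmul_matrix)
  also have "\<dots> = x \<bullet> ((transpose S ** S) *v y)" by (simp add: matrix_vector_mul_assoc)
  finally show ?thesis .
qed

lemma frob_sq: "(frob_norm S)\<^sup>2 = (\<Sum>r\<in>UNIV. (norm (S $ r))\<^sup>2)"
  for S :: "real^'k^'v"
  unfolding frob_norm_def by (simp add: sum_nonneg norm_vec_sq)

lemma norm_mv_sq: "(norm (S *v n))\<^sup>2 = (\<Sum>r\<in>UNIV. ((S $ r) \<bullet> n)\<^sup>2)"
  for S :: "real^'k^'v"
  by (simp add: norm_vec_sq mv_row)

lemma norm_mv_le_frob: "norm (S *v n) \<le> frob_norm S * norm n"
  for S :: "real^'k^'v"
proof -
  have "(norm (S *v n))\<^sup>2 \<le> (\<Sum>r\<in>UNIV. (norm (S $ r))\<^sup>2 * (norm n)\<^sup>2)"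
    unfolding norm_mv_sq
  proof (rule sum_mono)
    fix r
    have "\<bar>(S $ r) \<bullet> n\<bar> \<le> norm (S $ r) * norm n" by (rule Cauchy_Schwarz_ineq2)
    then have "\<bar>(S $ r) \<bullet> n\<bar>\<^sup>2 \<le> (norm (S $ r) * norm n)\<^sup>2"
      by (intro power_mono) auto
    then show "((S $ r) \<bullet> n)\<^sup>2 \<le> (norm (S $ r))\<^sup>2 * (norm n)\<^sup>2"
      by (simp add: power_mult_distrib)
  qed
  also have "\<dots> = (frob_norm S * norm n)\<^sup>2"
    by (simp add: frob_sq power_mult_distrib sum_distrib_right)
  finally show ?thesis
    by (rule power2_le_imp_le) (simp add: frob_norm_def sum_nonneg)
qed

lemma spec_le_frob: "spec_norm S \<le> frob_norm S"
  for S :: "real^'k^'v"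
  unfolding spec_norm_def by (rule onorm_le) (rule norm_mv_le_frob)

lemma norm_mv_le_spec: "norm (S *v n) \<le> spec_norm S * norm n"
  for S :: "real^'k^'v"
  unfolding spec_norm_def by (rule onorm) simp

lemma norm_mv_le_rows: "norm (S *v n) \<le> (\<Sum>r\<in>UNIV. \<bar>(S $ r) \<bullet> n\<bar>)"
  for S :: "real^'k^'v"
  using norm_le_l1_cart[of "S *v n"] by (simp add: mv_row)

lemma sets_iso[simp, measurable_cong]: "sets (iso_gaussian \<xi>) = sets borel"
  by (simp add: iso_gaussian_def)

lemma prob_space_iso: "\<xi> > 0 \<Longrightarrow> prob_space (iso_gaussian \<xi>)"
  by (simp add: iso_gaussian_distr prob_space_GQ prob_space.prob_space_distr)

lemma meas_norm_mv[measurable]: "(\<lambda>n. norm (S *v n)) \<in> borel_measurable (iso_gaussian \<xi>)"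
  for S :: "real^'k^'v"
proof -
  have "continuous_on UNIV (\<lambda>n. norm (S *v n))"
    by (intro continuous_intros linear_continuous_on matrix_vector_mul_bounded_linear)
  then have "(\<lambda>n. norm (S *v n)) \<in> borel_measurable borel"
    by (rule borel_measurable_continuous_onI)
  then show ?thesis by (simp add: measurable_cong_sets[OF sets_iso refl])
qed

lemma integrable_norm_mv:
  fixes S :: "real^'k^'v"
  assumes "\<xi> > 0"
  shows "integrable (iso_gaussian \<xi>) (\<lambda>n. norm (S *v n))"
  by (rule Bochner_Integration.integrable_bound[where f="\<lambda>n. \<Sum>r\<in>UNIV. \<bar>(S $ r) \<bullet> n\<bar>"])
     (auto intro!: iso_moments[OF assms] AE_I2 order_trans[OF norm_mv_le_rows])

lemma norm_mv_sq_moments: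
  fixes S :: "real^'k^'v"
  assumes "\<xi> > 0"
  shows "integrable (iso_gaussian \<xi>) (\<lambda>n. (norm (S *v n))\<^sup>2)"
    and "(\<integral>n. (norm (S *v n))\<^sup>2 \<partial>iso_gaussian \<xi>) = \<xi>\<^sup>2 * (frob_norm S)\<^sup>2"
  unfolding norm_mv_sq
  by (auto simp: iso_moments[OF assms] frob_sq sum_distrib_left)



lemma E_rank_one:
  fixes S :: "real^'k^'v"
  assumes "\<xi> > 0" and d1: "CARD('k) = 1 \<or> CARD('v) = 1"
  shows "(\<integral>n. norm (S *v n) \<partial>iso_gaussian \<xi>) = sqrt (2 / pi) * \<xi> * frob_norm S"
  using d1
proof
  assume "CARD('v) = 1"
  then obtain r0 :: 'v where U: "UNIV = {r0}" by (metis card_1_singletonE)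
  have nm: "norm (S *v n) = \<bar>(S $ r0) \<bullet> n\<bar>" for n
  proof -
    have "(norm (S *v n))\<^sup>2 = ((S $ r0) \<bullet> n)\<^sup>2" by (simp add: norm_mv_sq U)
    then show ?thesis by (metis norm_ge_zero real_sqrt_abs real_sqrt_unique)
  qed
  have F: "frob_norm S = norm (S $ r0)"
  proof -
    have "(frob_norm S)\<^sup>2 = (norm (S $ r0))\<^sup>2" by (simp add: frob_sq U)
    then show ?thesis by (simp add: frob_norm_def sum_nonneg power2_eq_iff_nonneg)
  qed
  show ?thesis by (simp add: nm F iso_moments[OF assms(1)])
next
  assume "CARD('k) = 1"
  then obtain j0 :: 'k where U: "UNIV = {j0}" by (metis card_1_singletonE)
  define col where "col = (\<chi> r. S $ r $ j0)"
  have nm: "norm (S *v n) = \<bar>axis j0 1 \<bullet> n\<bar> * norm col" for n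
  proof -
    have "(norm (S *v n))\<^sup>2 = (\<Sum>r\<in>UNIV. ((S $ r) \<bullet> n)\<^sup>2)" by (rule norm_mv_sq)
    also have "\<dots> = (\<bar>axis j0 1 \<bullet> n\<bar> * norm col)\<^sup>2"
      unfolding power_mult_distrib norm_vec_sq
      by (simp add: U inner_vec_def col_def inner_axis power_mult_distrib sum_distrib_left mult.commute)
    finally show ?thesis by (simp add: power2_eq_iff_nonneg)
  qed
  have F: "frob_norm S = norm col"
  proof -
    have "(frob_norm S)\<^sup>2 = (norm col)\<^sup>2" by (simp add: frob_sq U norm_vec_sq col_def)
    then show ?thesis by (simp add: frob_norm_def sum_nonneg power2_eq_iff_nonneg)
  qed
  show ?thesis by (simp add: nm F iso_moments[OF assms(1)])
qed

lemma amgm_aux: "(a::real) > 0 \<Longrightarrow> x \<le> x\<^sup>2 / (2 * a) + a / 2"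
proof -
  assume a: "a > 0"
  have e: "x\<^sup>2 / (2 * a) + a / 2 - x = (x - a)\<^sup>2 / (2 * a)"
    using a by (simp add: field_simps power2_eq_square)
  have "(x - a)\<^sup>2 / (2 * a) \<ge> 0" using a by simp
  then show ?thesis using e by linarith
qed



lemma Gamma_ratio_lb:
  fixes x :: real assumes x: "x \<ge> 1"
  shows "sqrt 2 * Gamma (x + 1/2) / Gamma x \<ge> 1"
proof -
  have cv: "convex_on {0<..} (ln \<circ> Gamma :: real \<Rightarrow> real)" by (rule log_convex_Gamma_real)
  have "(ln \<circ> Gamma) ((1 - 1/2) *\<^sub>R (x + 1/2) + (1/2) *\<^sub>R (x + 3/2))
        \<le> (1 - 1/2) * (ln \<circ> Gamma) (x + 1/2) + (1/2) * (ln \<circ> Gamma) (x + 3/2)"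
    by (rule convex_onD[OF cv]) (use x in auto)
  moreover have "(1 - 1/2) *\<^sub>R (x + 1/2) + (1/2) *\<^sub>R (x + 3/2) = x + 1" by (simp add: field_simps)
  ultimately have "2 * ln (Gamma (x + 1)) \<le> ln (Gamma (x + 1/2)) + ln (Gamma (x + 3/2))"
    by simp
  moreover have g1: "Gamma (x+1/2) > 0" "Gamma (x+3/2) > 0" "Gamma (x+1) > 0" "Gamma x > 0"
    using x by auto
  ultimately have "ln ((Gamma (x + 1))\<^sup>2) \<le> ln (Gamma (x + 1/2) * Gamma (x + 3/2))"
    by (simp add: ln_mult power2_eq_square)
  then have A: "(Gamma (x + 1))\<^sup>2 \<le> Gamma (x + 1/2) * Gamma (x + 3/2)"
    using g1 by simp
  have np1: "x + 1/2 \<notin> \<int>\<^sub>\<le>\<^sub>0" "x \<notin> \<int>\<^sub>\<le>\<^sub>0"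
    using x nonpos_Ints_nonpos by force+
  have "Gamma (x + 3/2) = (x + 1/2) * Gamma (x + 1/2)"
    using Gamma_plus1[OF np1(1)] by (simp add: add.assoc)
  moreover have "Gamma (x + 1) = x * Gamma x"
    using Gamma_plus1[OF np1(2)] .
  ultimately have B: "(x * Gamma x)\<^sup>2 \<le> (x + 1/2) * (Gamma (x + 1/2))\<^sup>2"
    using A by (simp add: power2_eq_square mult_ac)
  have C: "(Gamma x)\<^sup>2 \<le> 2 * (Gamma (x + 1/2))\<^sup>2"
  proof -
    have q: "x + 1/2 \<le> x\<^sup>2 * 2" proof -
      have "1 * x \<le> x * x" using x by (intro mult_right_mono) auto
      then show ?thesis using x unfolding power2_eq_square by linarith
    qed
    have "(x + 1/2) * (Gamma x)\<^sup>2 \<le> x\<^sup>2 * 2 * (Gamma x)\<^sup>2"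
      by (rule mult_right_mono[OF q]) simp
    then have "(x + 1/2) * (Gamma x)\<^sup>2 \<le> x\<^sup>2 * (Gamma x)\<^sup>2 * 2" by (simp add: mult_ac)
    then have "(x + 1/2) * (Gamma x)\<^sup>2 \<le> 2 * ((x + 1/2) * (Gamma (x + 1/2))\<^sup>2)"
      using B by (simp add: power_mult_distrib)
    then show ?thesis using x by simp
  qed
  have "Gamma x \<le> sqrt 2 * Gamma (x + 1/2)"
    using C g1 by (metis real_le_rsqrt real_sqrt_mult real_sqrt_unique less_imp_le mult_nonneg_nonneg
      real_sqrt_ge_zero real_le_rsqrt)
  then show ?thesis using g1 by simp
qed



theorem corollary2p5:
  fixes S :: "real^'k^'v" and w1 q :: "real^'k" and \<xi> \<gamma> :: real and d :: nat
  assumes "S \<noteq> 0"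
    and "top_right_singular_vector S w1"
    and "d = min CARD('k) CARD('v)"
    and "norm q = 1"
    and "S *v q \<noteq> 0"
    and "\<gamma> = \<bar>q \<bullet> w1\<bar>"
    and "\<gamma> > 0"
    and "\<xi> > 0"
  shows "sqrt (2 / (pi * eff_rank S)) * \<xi>
           \<le> (\<integral>n. norm (S *v (q + n) - S *v q) / norm (S *v q) \<partial>iso_gaussian \<xi>)
       \<and> (\<integral>n. norm (S *v (q + n) - S *v q) / norm (S *v q) \<partial>iso_gaussian \<xi>)
           \<le> sqrt (eff_rank S) / \<gamma> * \<xi> *
              (sqrt 2 * Gamma ((real d + 1) / 2) / Gamma (real d / 2))"
proof -
  note xi = assms(8)
  define \<sigma> where "\<sigma> = spec_norm S"
  define F where "F = frob_norm S"
  define c where "c = norm (S *v q)"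
  define E where "E = (\<integral>n. norm (S *v n) \<partial>iso_gaussian \<xi>)"
  define \<mu> where "\<mu> = sqrt 2 * Gamma ((real d + 1) / 2) / Gamma (real d / 2)"
  interpret P: prob_space "iso_gaussian \<xi>" by (rule prob_space_iso[OF xi])
  have w1: "norm w1 = 1" and eig: "(transpose S ** S) *v w1 = \<sigma>\<^sup>2 *\<^sub>R w1"
    using assms(2) by (auto simp: top_right_singular_vector_def \<sigma>_def)
  have c_le: "c \<le> \<sigma>" using norm_mv_le_spec[of S q] assms(4) by (simp add: c_def \<sigma>_def)
  have c_pos: "c > 0" using assms(5) by (simp add: c_def)
  have sig_pos: "\<sigma> > 0" using c_le c_pos by linarith
  have sig_F: "\<sigma> \<le> F" using spec_le_frob[of S] by (simp add: \<sigma>_def F_def)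
  have F_pos: "F > 0" using sig_pos sig_F by linarith
  have inn: "(S *v x) \<bullet> (S *v w1) = \<sigma>\<^sup>2 * (x \<bullet> w1)" for x
    by (simp add: mv_inner_eq eig)
  have nw: "norm (S *v w1) = \<sigma>"
  proof -
    have "(norm (S *v w1))\<^sup>2 = \<sigma>\<^sup>2"
      using inn[of w1] w1 power2_norm_eq_inner[of w1] by (simp add: power2_norm_eq_inner)
    then show ?thesis using sig_pos by (simp add: power2_eq_iff_nonneg)
  qed
  have c_ge: "\<sigma> * \<gamma> \<le> c"
  proof -
    have "\<sigma>\<^sup>2 * \<gamma> = \<bar>(S *v q) \<bullet> (S *v w1)\<bar>"
      using inn[of q] sig_pos by (simp add: assms(6) abs_mult)
    also have "\<dots> \<le> c * \<sigma>" using Cauchy_Schwarz_ineq2[of "S *v q" "S *v w1"] by (simp add: c_def nw)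
    finally have "\<sigma> * (\<sigma> * \<gamma>) \<le> \<sigma> * c" by (simp add: power2_eq_square mult_ac)
    then show ?thesis using sig_pos by simp
  qed
  have pw: "\<sigma> * \<bar>w1 \<bullet> n\<bar> \<le> norm (S *v n)" for n
  proof -
    have "\<sigma> * (\<sigma> * \<bar>w1 \<bullet> n\<bar>) = \<bar>(S *v n) \<bullet> (S *v w1)\<bar>"
      using inn[of n] sig_pos by (simp add: abs_mult power2_eq_square inner_commute)
    also have "\<dots> \<le> norm (S *v n) * \<sigma>" using Cauchy_Schwarz_ineq2[of "S *v n" "S *v w1"] by (simp add: nw)
    finally show ?thesis using sig_pos by (simp add: mult.commute)
  qed
  have intE: "integrable (iso_gaussian \<xi>) (\<lambda>n. norm (S *v n))" by (rule integrable_norm_mv[OF xi])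
  have E_nonneg: "E \<ge> 0" unfolding E_def by simp
  have E_lb: "\<sigma> * (sqrt (2 / pi) * \<xi>) \<le> E"
  proof -
    have "(\<integral>n. \<sigma> * \<bar>w1 \<bullet> n\<bar> \<partial>iso_gaussian \<xi>) \<le> E"
      unfolding E_def by (rule integral_mono) (use pw intE iso_moments[OF xi] in auto)
    then show ?thesis using iso_moments(2)[OF xi, of w1] w1 by simp
  qed
  have E_ub: "E \<le> F * \<xi>"
  proof -
    have a: "F * \<xi> > 0" using F_pos xi by simp
    have i2: "integrable (iso_gaussian \<xi>) (\<lambda>n. (norm (S *v n))\<^sup>2 / (2 * (F * \<xi>)))"
      by (intro integrable_divide_zero norm_mv_sq_moments(1)[OF xi])
    have "E \<le> (\<integral>n. (norm (S *v n))\<^sup>2 / (2 * (F * \<xi>)) + (F * \<xi>) / 2 \<partial>iso_gaussian \<xi>)"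
      unfolding E_def by (rule integral_mono) (use amgm_aux[OF a] intE i2 in auto)
    also have "\<dots> = (\<xi>\<^sup>2 * F\<^sup>2) / (2 * (F * \<xi>)) + (F * \<xi>) / 2"
      using norm_mv_sq_moments[OF xi, of S] i2 by (simp add: F_def Bochner_Integration.integral_add P.prob_space)
    also have "\<dots> = F * \<xi>" using a by (simp add: field_simps power2_eq_square)
    finally show ?thesis .
  qed
  have integrand: "(\<integral>n. norm (S *v (q + n) - S *v q) / norm (S *v q) \<partial>iso_gaussian \<xi>) = E / c"
    by (simp add: E_def c_def matrix_vector_right_distrib)
  have er: "eff_rank S = F\<^sup>2 / \<sigma>\<^sup>2" by (simp add: eff_rank_def F_def \<sigma>_def)
  have er_ge: "eff_rank S \<ge> 1" using er sig_F sig_pos by (simp add: power_mono)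
  have sqrt_er: "sqrt (eff_rank S) = F / \<sigma>"
    using er F_pos sig_pos by (simp add: real_sqrt_divide)
  have lower: "sqrt (2 / (pi * eff_rank S)) * \<xi> \<le> E / c"
  proof -
    have "2 / (pi * eff_rank S) \<le> 2 / pi"
      using er_ge by (simp add: divide_simps)
    then have "sqrt (2 / (pi * eff_rank S)) \<le> sqrt (2 / pi)" by (rule real_sqrt_le_mono)
    then have "sqrt (2 / (pi * eff_rank S)) * \<xi> \<le> sqrt (2 / pi) * \<xi>"
      using xi by (simp add: mult_right_mono)
    also have "\<dots> \<le> E / \<sigma>" using E_lb sig_pos by (simp add: field_simps)
    also have "\<dots> \<le> E / c" using c_le c_pos E_nonneg by (simp add: divide_left_mono)
    finally show ?thesis .
  qed
  have E_c: "E / c \<le> E / (\<sigma> * \<gamma>)"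
    using divide_left_mono[OF c_ge E_nonneg] sig_pos assms(7) c_pos by simp
  have d_pos: "d \<ge> 1" using assms(3) by simp
  have upper: "E / c \<le> sqrt (eff_rank S) / \<gamma> * \<xi> * \<mu>"
  proof (cases "d = 1")
    case True
    then have "CARD('k) = 1 \<or> CARD('v) = 1" using assms(3) by linarith
    then have Ev: "E = sqrt (2 / pi) * \<xi> * F" unfolding E_def F_def by (rule E_rank_one[OF xi])
    have "\<mu> = sqrt (2 / pi)" using True by (simp add: \<mu>_def Gamma_one_half_real real_sqrt_divide)
    then have "sqrt (eff_rank S) / \<gamma> * \<xi> * \<mu> = E / (\<sigma> * \<gamma>)"
      by (simp add: sqrt_er Ev field_simps)
    then show ?thesis using E_c by simp
  next
    case False
    then have "real d / 2 \<ge> 1" using d_pos by simp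
    from Gamma_ratio_lb[OF this] have mu1: "\<mu> \<ge> 1"
      by (simp add: \<mu>_def add_divide_distrib)
    have "E / (\<sigma> * \<gamma>) \<le> (F * \<xi>) / (\<sigma> * \<gamma>)"
      using E_ub sig_pos assms(7) by (simp add: divide_right_mono)
    also have "\<dots> \<le> (F * \<xi>) / (\<sigma> * \<gamma>) * \<mu>"
    proof -
      have "0 \<le> (F * \<xi>) / (\<sigma> * \<gamma>)" using F_pos xi sig_pos assms(7) by simp
      then show ?thesis using mult_left_mono[OF mu1] by fastforce
    qed
    also have "\<dots> = sqrt (eff_rank S) / \<gamma> * \<xi> * \<mu>"
      by (simp add: sqrt_er field_simps)
    finally show ?thesis using E_c by linarith
  qed
  show ?thesis using lower upper integrand by (simp add: \<mu>_def)
qed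

end
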